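(* A function $f:\mathbb{N}^d\to\mathbb{N}$ is stably computable by an output-oblivious CRN if and only if it is stably computable by an output-monotonic CRN.
   Context: A chemical reaction network (CRN) is a pair $(\mathcal{S},\mathcal{R})$ of a finite set of species and a finite set of reactions $(\vec{R},\vec{P})\in\mathbb{N}^{\mathcal{S}}\times\mathbb{N}^{\mathcal{S}}$. A configuration is $\vec{C}\in\mathbb{N}^{\mathcal{S}}$; a reaction is applicable if $\vec{R}\le\vec{C}$ and yields $\vec{C}-\vec{R}+\vec{P}$; reachability is via finite sequences of applicable reactions. To compute $f:\mathbb{N}^d\to\mathbb{N}$ a CRN has input species $X_1,\ldots,X_d$, output species $Y$, leader species $L$; the initial configuration $\vec{I}_{\vec{x}}$ has $\vec{x}(i)$ copies of $X_i$, one $L$, nothing else. $\vec{C}$ is stable if all configurations reachable from it have the same count of $Y$. The CRN stably computes $f$ if for every $\vec{x}$ and every $\vec{C}$ reachable from $\vec{I}_{\vec{x}}$ some stable $\vec{O}$ reachable from $\vec{C}$ has $\vec{O}(Y)=f(\vec{x})$. A CRN is output-oblivious if $\vec{R}(Y)=0$ for every reaction $(\vec{R},\vec{P})$; it is output-monotonic if no reaction decreases the count of $Y$, i.e. $\vec{P}(Y)\ge\vec{R}(Y)$ for every reaction. *)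

theory Defs
  imports Main
begin

text \<open>Species are represented by natural numbers; a configuration is a function
  from species to counts (vectors in N^S, zero outside the species set).\<close>

type_synonym config = "nat \<Rightarrow> nat"
type_synonym reaction = "config \<times> config"

record crn =
  species :: "nat set"
  reactions :: "reaction set"
  inputs :: "nat \<Rightarrow> nat"
  out_sp :: nat
  leader_sp :: nat

definition wf_crn :: "nat \<Rightarrow> crn \<Rightarrow> bool" where
  "wf_crn d C \<longleftrightarrow>
     finite (species C) \<and> finite (reactions C) \<and>
     (\<forall>(R, P) \<in> reactions C. \<forall>s. s \<notin> species C \<longrightarrow> R s = 0 \<and> P s = 0) \<and>
     inputs C ` {..<d} \<subseteq> species C \<and> inj_on (inputs C) {..<d} \<and>
     out_sp C \<in> species C \<and> leader_sp C \<in> species C \<and>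
     leader_sp C \<notin> inputs C ` {..<d} \<and> out_sp C \<notin> inputs C ` {..<d} \<and>
     out_sp C \<noteq> leader_sp C"

definition step :: "crn \<Rightarrow> config \<Rightarrow> config \<Rightarrow> bool" where
  "step C c c' \<longleftrightarrow> (\<exists>(R, P) \<in> reactions C. R \<le> c \<and> c' = (\<lambda>s. c s - R s + P s))"

definition reachable :: "crn \<Rightarrow> config \<Rightarrow> config \<Rightarrow> bool" where
  "reachable C = (step C)\<^sup>*\<^sup>*"

definition stable :: "crn \<Rightarrow> config \<Rightarrow> bool" where
  "stable C c \<longleftrightarrow> (\<forall>c'. reachable C c c' \<longrightarrow> c' (out_sp C) = c (out_sp C))"

definition init_config :: "nat \<Rightarrow> crn \<Rightarrow> nat list \<Rightarrow> config" where
  "init_config d C x = (\<lambda>s. (\<Sum>i<d. if inputs C i = s then x ! i else 0)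
                            + (if s = leader_sp C then 1 else 0))"

text \<open>Inputs in N^d are lists of length d.\<close>
definition stably_computes :: "nat \<Rightarrow> crn \<Rightarrow> (nat list \<Rightarrow> nat) \<Rightarrow> bool" where
  "stably_computes d C f \<longleftrightarrow> wf_crn d C \<and>
     (\<forall>x. length x = d \<longrightarrow>
        (\<forall>c. reachable C (init_config d C x) c \<longrightarrow>
           (\<exists>o'. reachable C c o' \<and> stable C o' \<and> o' (out_sp C) = f x)))"

definition output_oblivious :: "crn \<Rightarrow> bool" where
  "output_oblivious C \<longleftrightarrow> (\<forall>(R, P) \<in> reactions C. R (out_sp C) = 0)"

definition output_monotonic :: "crn \<Rightarrow> bool" where
  "output_monotonic C \<longleftrightarrow> (\<forall>(R, P) \<in> reactions C. P (out_sp C) \<ge> R (out_sp C))"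

end

theory Submission
  imports Defs
begin

definition mkobl :: "crn \<Rightarrow> nat \<Rightarrow> crn" where
  "mkobl C n = C\<lparr>species := insert n (species C),
     reactions := (\<lambda>(R,P). (R, P(n := P (out_sp C) - R (out_sp C)))) ` reactions C,
     out_sp := n\<rparr>"

lemma rz: "wf_crn d C \<Longrightarrow> n \<notin> species C \<Longrightarrow> (R,P) \<in> reactions C \<Longrightarrow> R n = 0 \<and> P n = 0"
  unfolding wf_crn_def by fast

lemma L1:
  assumes wf: "wf_crn d C" and nn: "n \<notin> species C" and mono: "output_monotonic C"
    and st: "step (mkobl C n) c c'"
  shows "step C (c(n:=0)) (c'(n:=0)) \<and> (c n = c (out_sp C) \<longrightarrow> c' n = c' (out_sp C))"
proof -
  obtain R P where RP: "(R,P) \<in> reactions C" and le: "R \<le> c"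
    and c': "c' = (\<lambda>s. c s - R s + (P(n := P (out_sp C) - R (out_sp C))) s)"
    using st unfolding step_def mkobl_def by auto
  have z: "R n = 0" "P n = 0" using rz[OF wf nn RP] by auto
  have yn: "out_sp C \<noteq> n" using wf nn unfolding wf_crn_def by auto
  have m: "R (out_sp C) \<le> P (out_sp C)" using mono RP unfolding output_monotonic_def by auto
  have "R \<le> c(n:=0)" using le z by (auto simp: le_fun_def)
  moreover have "c'(n:=0) = (\<lambda>s. (c(n:=0)) s - R s + P s)"
    using z by (auto simp: c')
  ultimately have "step C (c(n:=0)) (c'(n:=0))" using RP unfolding step_def by blast
  moreover have "c n = c (out_sp C) \<longrightarrow> c' n = c' (out_sp C)"
    using z yn m le by (auto simp: c' le_fun_def)
  ultimately show ?thesis by blast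
qed

lemma L2:
  assumes wf: "wf_crn d C" and nn: "n \<notin> species C" and mono: "output_monotonic C"
    and st: "step C c c'" and c0: "c n = 0"
  shows "c' n = 0 \<and> step (mkobl C n) (c(n := c (out_sp C))) (c'(n := c' (out_sp C)))"
proof -
  obtain R P where RP: "(R,P) \<in> reactions C" and le: "R \<le> c"
    and c': "c' = (\<lambda>s. c s - R s + P s)"
    using st unfolding step_def by auto
  have z: "R n = 0" "P n = 0" using rz[OF wf nn RP] by auto
  have yn: "out_sp C \<noteq> n" using wf nn unfolding wf_crn_def by auto
  have m: "R (out_sp C) \<le> P (out_sp C)" using mono RP unfolding output_monotonic_def by auto
  have ly: "R (out_sp C) \<le> c (out_sp C)" using le by (auto simp: le_fun_def)
  have "(R, P(n := P (out_sp C) - R (out_sp C))) \<in> reactions (mkobl C n)"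
    using RP unfolding mkobl_def by force
  moreover have "R \<le> c(n := c (out_sp C))" using le z by (auto simp: le_fun_def)
  moreover have "c'(n := c' (out_sp C)) = (\<lambda>s. (c(n := c (out_sp C))) s - R s
        + (P(n := P (out_sp C) - R (out_sp C))) s)"
    using z yn m ly by (auto simp: c')
  ultimately have "step (mkobl C n) (c(n := c (out_sp C))) (c'(n := c' (out_sp C)))"
    unfolding step_def by blast
  moreover have "c' n = 0" using z c0 by (simp add: c')
  ultimately show ?thesis by blast
qed

lemma R1:
  assumes wf: "wf_crn d C" and nn: "n \<notin> species C" and mono: "output_monotonic C"
  shows "reachable (mkobl C n) c c' \<Longrightarrow> reachable C (c(n:=0)) (c'(n:=0))
          \<and> (c n = c (out_sp C) \<longrightarrow> c' n = c' (out_sp C))"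
  unfolding reachable_def
proof (induction rule: rtranclp_induct)
  case base then show ?case by simp
next
  case (step y z)
  then show ?case using L1[OF wf nn mono step(2)]
    by (meson rtranclp.rtrancl_into_rtrancl)
qed

lemma R2:
  assumes wf: "wf_crn d C" and nn: "n \<notin> species C" and mono: "output_monotonic C"
  shows "reachable C c c' \<Longrightarrow> c n = 0 \<Longrightarrow> c' n = 0 \<and>
     reachable (mkobl C n) (c(n := c (out_sp C))) (c'(n := c' (out_sp C)))"
  unfolding reachable_def
proof (induction rule: rtranclp_induct)
  case base then show ?case by simp
next
  case (step y z)
  then show ?case using L2[OF wf nn mono step(2)]
    by (meson rtranclp.rtrancl_into_rtrancl)
qed

lemma oblivious_from_monotonic:
  assumes mono: "output_monotonic C" and sc: "stably_computes d C f"
  shows "\<exists>C'. output_oblivious C' \<and> stably_computes d C' f"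
proof -
  have wf: "wf_crn d C" using sc unfolding stably_computes_def by blast
  define n where "n = Suc (Max (species C))"
  have fin: "finite (species C)" using wf unfolding wf_crn_def by blast
  have nn: "n \<notin> species C"
  proof
    assume "n \<in> species C" then have "n \<le> Max (species C)" using fin by simp
    then show False unfolding n_def by simp
  qed
  let ?C = "mkobl C n"
  have yn: "out_sp C \<noteq> n" using wf nn unfolding wf_crn_def by auto
  have obl: "output_oblivious ?C"
    unfolding output_oblivious_def mkobl_def using rz[OF wf nn] by auto
  have wf': "wf_crn d ?C"
    using wf nn unfolding wf_crn_def mkobl_def
    by (auto simp: split_beta)
  have init: "init_config d ?C x = init_config d C x" for x
    unfolding init_config_def mkobl_def by simp
  have i0: "init_config d C x n = 0" "init_config d C x (out_sp C) = 0" for x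
    using wf nn unfolding init_config_def wf_crn_def by (auto intro!: sum.neutral) (metis image_eqI lessThan_iff)+
  have "stably_computes d ?C f"
    unfolding stably_computes_def
  proof (intro conjI wf' allI impI)
    fix x c
    assume lx: "length x = d" and r: "reachable ?C (init_config d ?C x) c"
    from R1[OF wf nn mono r] i0 init
    have r1: "reachable C (init_config d C x) (c(n:=0))" and inv: "c n = c (out_sp C)"
      by (auto simp: fun_upd_idem)
    from sc lx r1 obtain o' where o1: "reachable C (c(n:=0)) o'" and o2: "stable C o'"
      and o3: "o' (out_sp C) = f x" unfolding stably_computes_def by blast
    from R2[OF wf nn mono o1]
    have o0: "o' n = 0" and r2: "reachable ?C (c(n:=0, n := c (out_sp C))) (o'(n := o' (out_sp C)))"
      using yn by auto
    have ceq: "c(n:=0, n := c (out_sp C)) = c" using inv by auto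
    have "stable ?C (o'(n := o' (out_sp C)))"
      unfolding stable_def
    proof (intro allI impI)
      fix c' assume "reachable ?C (o'(n := o' (out_sp C))) c'"
      from R1[OF wf nn mono this] yn o0
      have a: "reachable C o' (c'(n:=0))" and b: "c' n = c' (out_sp C)"
        by (auto simp: fun_upd_idem)
      from o2 a have "c' (out_sp C) = o' (out_sp C)" unfolding stable_def using yn by force
      then show "c' (out_sp ?C) = (o'(n := o' (out_sp C))) (out_sp ?C)"
        using b by (simp add: mkobl_def)
    qed
    then show "\<exists>o'. reachable ?C c o' \<and> stable ?C o' \<and> o' (out_sp ?C) = f x"
      using r2 ceq o3 by (auto simp: mkobl_def)
  qed
  then show ?thesis using obl by blast
qed

theorem mainTheorem11:
  fixes d :: nat and f :: "nat list \<Rightarrow> nat"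
  shows "(\<exists>C. output_oblivious C \<and> stably_computes d C f) \<longleftrightarrow>
         (\<exists>C. output_monotonic C \<and> stably_computes d C f)"
proof
  assume "\<exists>C. output_oblivious C \<and> stably_computes d C f"
  then obtain C where "output_oblivious C" "stably_computes d C f" by blast
  then have "output_monotonic C"
    unfolding output_oblivious_def output_monotonic_def by auto
  then show "\<exists>C. output_monotonic C \<and> stably_computes d C f" using \<open>stably_computes d C f\<close> by blast
next
  assume "\<exists>C. output_monotonic C \<and> stably_computes d C f"
  then show "\<exists>C. output_oblivious C \<and> stably_computes d C f"
    using oblivious_from_monotonic by blast
qed

end
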